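(* Let $0\to N\to G\xrightarrow{p} Q\to 1$ be a short exact sequence of groups with $N$ abelian (written additively), and let $C_G(N)$ be the centralizer of $N$ in $G$, a $Q$-group via $p(x)\cdot g=x+g-x$. Let $End^N(G)$ be the set of endomorphisms $\alpha$ of $G$ with $\alpha|_N=\mathrm{id}_N$. Then there is a bijection $End^N(G)\to Z^1(Q,C_G(N))$ sending $\alpha$ to the map $\psi$ determined by $\alpha(x)=\psi(p(x))+x$ for $x\in G$.
   Context: For a group $Q$ acting on a (not necessarily abelian) group $U$, $Z^1(Q,U)$ is the set of crossed homomorphisms $\psi:Q\to U$, i.e. $\psi(x+y)=\psi(x)+x\cdot\psi(y)$. *)

theory Defs
  imports "HOL-Algebra.Algebra"
begin

definition centralizer_set :: "('a, 'b) monoid_scheme \<Rightarrow> 'a set \<Rightarrow> 'a set" where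
  "centralizer_set G N = {g \<in> carrier G. \<forall>n\<in>N. g \<otimes>\<^bsub>G\<^esub> n = n \<otimes>\<^bsub>G\<^esub> g}"

definition conj_action :: "('a, 'b) monoid_scheme \<Rightarrow> ('a \<Rightarrow> 'q) \<Rightarrow> 'q \<Rightarrow> 'a \<Rightarrow> 'a" where
  "conj_action G p q g =
     (let x = (SOME x. x \<in> carrier G \<and> p x = q) in x \<otimes>\<^bsub>G\<^esub> g \<otimes>\<^bsub>G\<^esub> inv\<^bsub>G\<^esub> x)"

definition Z1 :: "('q, 'c) monoid_scheme \<Rightarrow> ('u, 'd) monoid_scheme \<Rightarrow> ('q \<Rightarrow> 'u \<Rightarrow> 'u)
                   \<Rightarrow> ('q \<Rightarrow> 'u) set" where
  "Z1 Q U act = {\<psi> \<in> carrier Q \<rightarrow>\<^sub>E carrier U.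
      \<forall>x\<in>carrier Q. \<forall>y\<in>carrier Q.
        \<psi> (x \<otimes>\<^bsub>Q\<^esub> y) = \<psi> x \<otimes>\<^bsub>U\<^esub> act x (\<psi> y)}"

definition EndN :: "('a, 'b) monoid_scheme \<Rightarrow> 'a set \<Rightarrow> ('a \<Rightarrow> 'a) set" where
  "EndN G N = {\<alpha> \<in> hom G G. \<alpha> \<in> extensional (carrier G) \<and> (\<forall>n\<in>N. \<alpha> n = n)}"

end

theory Submission
  imports Defs
begin

theorem lemma15:
  fixes G :: "('a, 'b) monoid_scheme" and Q :: "('q, 'c) monoid_scheme"
    and N :: "'a set" and p :: "'a \<Rightarrow> 'q"
  assumes "group G" and "group Q"
    and "p \<in> hom G Q" and "p ` carrier G = carrier Q"
    and "kernel G Q p = N"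
    and "\<forall>a\<in>N. \<forall>b\<in>N. a \<otimes>\<^bsub>G\<^esub> b = b \<otimes>\<^bsub>G\<^esub> a"
  shows "\<exists>\<Phi>. bij_betw \<Phi> (EndN G N)
              (Z1 Q (G\<lparr>carrier := centralizer_set G N\<rparr>) (conj_action G p))
           \<and> (\<forall>\<alpha>\<in>EndN G N. \<forall>x\<in>carrier G. \<alpha> x = \<Phi> \<alpha> (p x) \<otimes>\<^bsub>G\<^esub> x)"
proof -
  interpret G: group G by fact
  interpret Q: group Q by fact
  interpret h: group_hom G Q p using assms(1-3) by (simp add: group_hom_def group_hom_axioms_def)
  have canc[simp]: "a \<otimes>\<^bsub>G\<^esub> (inv\<^bsub>G\<^esub> a \<otimes>\<^bsub>G\<^esub> y) = y" "inv\<^bsub>G\<^esub> a \<otimes>\<^bsub>G\<^esub> (a \<otimes>\<^bsub>G\<^esub> y) = y"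
    if "a \<in> carrier G" "y \<in> carrier G" for a y
    using that by (simp_all add: G.m_assoc[symmetric])
  define C where "C = centralizer_set G N"
  define r where "r q = (SOME x. x \<in> carrier G \<and> p x = q)" for q
  have Nd: "N = {x \<in> carrier G. p x = \<one>\<^bsub>Q\<^esub>}" using assms(5) by (simp add: kernel_def)
  have NG: "N \<subseteq> carrier G" using Nd by auto
  have CG: "C \<subseteq> carrier G" by (auto simp: C_def centralizer_set_def)
  have Cc: "c \<otimes>\<^bsub>G\<^esub> n = n \<otimes>\<^bsub>G\<^esub> c" if "c \<in> C" "n \<in> N" for c n
    using that by (auto simp: C_def centralizer_set_def)
  have r1: "r (p x) \<in> carrier G" "p (r (p x)) = p x" if "x \<in> carrier G" for x
  proof -
    have "\<exists>y. y \<in> carrier G \<and> p y = p x" using that by blast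
    then have "r (p x) \<in> carrier G \<and> p (r (p x)) = p x" unfolding r_def by (rule someI_ex)
    then show "r (p x) \<in> carrier G" "p (r (p x)) = p x" by auto
  qed
  have r2: "\<exists>n\<in>N. r (p x) = x \<otimes>\<^bsub>G\<^esub> n" if x: "x \<in> carrier G" for x
  proof
    let ?n = "inv\<^bsub>G\<^esub> x \<otimes>\<^bsub>G\<^esub> r (p x)"
    have "p ?n = inv\<^bsub>Q\<^esub> (p x) \<otimes>\<^bsub>Q\<^esub> p x" using x r1[OF x] by simp
    then show "?n \<in> N" using x r1[OF x] Nd by simp
    show "r (p x) = x \<otimes>\<^bsub>G\<^esub> ?n" using x r1[OF x]
      by (simp add: G.m_assoc[symmetric])
  qed
  have normal: "x \<otimes>\<^bsub>G\<^esub> n \<otimes>\<^bsub>G\<^esub> inv\<^bsub>G\<^esub> x \<in> N" if "x \<in> carrier G" "n \<in> N" for x n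
  proof -
    have n: "n \<in> carrier G" "p n = \<one>\<^bsub>Q\<^esub>" using that Nd by auto
    show ?thesis using that n Nd by simp
  qed
  have act: "conj_action G p (p x) c = x \<otimes>\<^bsub>G\<^esub> c \<otimes>\<^bsub>G\<^esub> inv\<^bsub>G\<^esub> x"
    if x: "x \<in> carrier G" and c: "c \<in> C" for x c
  proof -
    obtain n where n: "n \<in> N" "r (p x) = x \<otimes>\<^bsub>G\<^esub> n" using r2[OF x] by blast
    have nG: "n \<in> carrier G" using n NG by auto
    have cG: "c \<in> carrier G" using c CG by auto
    have "conj_action G p (p x) c = r (p x) \<otimes>\<^bsub>G\<^esub> c \<otimes>\<^bsub>G\<^esub> inv\<^bsub>G\<^esub> r (p x)"
      by (simp add: conj_action_def r_def Let_def)
    also have "\<dots> = x \<otimes>\<^bsub>G\<^esub> (n \<otimes>\<^bsub>G\<^esub> c) \<otimes>\<^bsub>G\<^esub> inv\<^bsub>G\<^esub> n \<otimes>\<^bsub>G\<^esub> inv\<^bsub>G\<^esub> x"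
      using x nG cG n by (simp add: G.inv_mult_group G.m_assoc)
    also have "\<dots> = x \<otimes>\<^bsub>G\<^esub> (c \<otimes>\<^bsub>G\<^esub> n) \<otimes>\<^bsub>G\<^esub> inv\<^bsub>G\<^esub> n \<otimes>\<^bsub>G\<^esub> inv\<^bsub>G\<^esub> x"
      using Cc[OF c n(1)] by simp
    also have "\<dots> = x \<otimes>\<^bsub>G\<^esub> c \<otimes>\<^bsub>G\<^esub> (n \<otimes>\<^bsub>G\<^esub> inv\<^bsub>G\<^esub> n) \<otimes>\<^bsub>G\<^esub> inv\<^bsub>G\<^esub> x"
      using x nG cG by (simp only: G.m_assoc G.inv_closed G.m_closed)
    also have "\<dots> = x \<otimes>\<^bsub>G\<^esub> c \<otimes>\<^bsub>G\<^esub> inv\<^bsub>G\<^esub> x"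
      using x nG cG by simp
    finally show ?thesis .
  qed
  define \<Phi> where "\<Phi> \<alpha> = (\<lambda>q\<in>carrier Q. \<alpha> (r q) \<otimes>\<^bsub>G\<^esub> inv\<^bsub>G\<^esub> r q)" for \<alpha> :: "'a \<Rightarrow> 'a"
  have Phi_p: "\<Phi> \<alpha> (p x) = \<alpha> x \<otimes>\<^bsub>G\<^esub> inv\<^bsub>G\<^esub> x" if a: "\<alpha> \<in> EndN G N" and x: "x \<in> carrier G" for \<alpha> x
  proof -
    obtain n where n: "n \<in> N" "r (p x) = x \<otimes>\<^bsub>G\<^esub> n" using r2[OF x] by blast
    have nG: "n \<in> carrier G" using n NG by auto
    have ah: "\<alpha> \<in> hom G G" and an: "\<alpha> n = n" and aG: "\<alpha> x \<in> carrier G"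
      using a n x by (auto simp: EndN_def hom_def)
    have "\<Phi> \<alpha> (p x) = \<alpha> (x \<otimes>\<^bsub>G\<^esub> n) \<otimes>\<^bsub>G\<^esub> inv\<^bsub>G\<^esub> (x \<otimes>\<^bsub>G\<^esub> n)"
      using x n by (simp add: \<Phi>_def)
    also have "\<dots> = \<alpha> x \<otimes>\<^bsub>G\<^esub> (n \<otimes>\<^bsub>G\<^esub> inv\<^bsub>G\<^esub> n) \<otimes>\<^bsub>G\<^esub> inv\<^bsub>G\<^esub> x"
      using ah x nG an aG by (simp add: hom_mult G.inv_mult_group G.m_assoc)
    also have "\<dots> = \<alpha> x \<otimes>\<^bsub>G\<^esub> inv\<^bsub>G\<^esub> x" using nG aG x by simp
    finally show ?thesis .
  qed

  have inC: "\<alpha> x \<otimes>\<^bsub>G\<^esub> inv\<^bsub>G\<^esub> x \<in> C" if a: "\<alpha> \<in> EndN G N" and x: "x \<in> carrier G" for \<alpha> x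
  proof -
    have ah: "\<alpha> \<in> hom G G" and aN: "\<And>n. n \<in> N \<Longrightarrow> \<alpha> n = n" and aG: "\<alpha> x \<in> carrier G"
      using a x by (auto simp: EndN_def hom_def)
    have "\<alpha> x \<otimes>\<^bsub>G\<^esub> inv\<^bsub>G\<^esub> x \<otimes>\<^bsub>G\<^esub> n = n \<otimes>\<^bsub>G\<^esub> (\<alpha> x \<otimes>\<^bsub>G\<^esub> inv\<^bsub>G\<^esub> x)" if n: "n \<in> N" for n
    proof -
      have nG: "n \<in> carrier G" using n NG by auto
      have m: "inv\<^bsub>G\<^esub> x \<otimes>\<^bsub>G\<^esub> n \<otimes>\<^bsub>G\<^esub> inv\<^bsub>G\<^esub> (inv\<^bsub>G\<^esub> x) \<in> N"
        using normal[OF _ n, of "inv\<^bsub>G\<^esub> x"] x by simp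
      have ai: "\<alpha> (inv\<^bsub>G\<^esub> x) = inv\<^bsub>G\<^esub> \<alpha> x"
        using ah x by (simp add: group_hom.hom_inv group_hom_def group_hom_axioms_def)
      have "\<alpha> (inv\<^bsub>G\<^esub> x \<otimes>\<^bsub>G\<^esub> n \<otimes>\<^bsub>G\<^esub> x) = inv\<^bsub>G\<^esub> x \<otimes>\<^bsub>G\<^esub> n \<otimes>\<^bsub>G\<^esub> x"
        using aN[OF m] x by simp
      then have e: "inv\<^bsub>G\<^esub> \<alpha> x \<otimes>\<^bsub>G\<^esub> n \<otimes>\<^bsub>G\<^esub> \<alpha> x = inv\<^bsub>G\<^esub> x \<otimes>\<^bsub>G\<^esub> n \<otimes>\<^bsub>G\<^esub> x"
        using ah x nG aN[OF n] ai by (simp add: hom_mult)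
      have "\<alpha> x \<otimes>\<^bsub>G\<^esub> inv\<^bsub>G\<^esub> x \<otimes>\<^bsub>G\<^esub> n = \<alpha> x \<otimes>\<^bsub>G\<^esub> (inv\<^bsub>G\<^esub> x \<otimes>\<^bsub>G\<^esub> n \<otimes>\<^bsub>G\<^esub> x) \<otimes>\<^bsub>G\<^esub> inv\<^bsub>G\<^esub> x"
        using x nG aG by (simp add: G.m_assoc)
      also have "\<dots> = \<alpha> x \<otimes>\<^bsub>G\<^esub> (inv\<^bsub>G\<^esub> \<alpha> x \<otimes>\<^bsub>G\<^esub> n \<otimes>\<^bsub>G\<^esub> \<alpha> x) \<otimes>\<^bsub>G\<^esub> inv\<^bsub>G\<^esub> x"
        using e by simp
      also have "\<dots> = n \<otimes>\<^bsub>G\<^esub> (\<alpha> x \<otimes>\<^bsub>G\<^esub> inv\<^bsub>G\<^esub> x)"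
        using x nG aG by (simp add: G.m_assoc)
      finally show ?thesis .
    qed
    then show ?thesis using x aG by (auto simp: C_def centralizer_set_def)
  qed
  define \<Psi> where "\<Psi> \<psi> = (\<lambda>x\<in>carrier G. \<psi> (p x) \<otimes>\<^bsub>G\<^esub> x)" for \<psi> :: "'q \<Rightarrow> 'a"
  let ?Z = "Z1 Q (G\<lparr>carrier := C\<rparr>) (conj_action G p)"
  have Zd: "\<psi> \<in> ?Z \<longleftrightarrow> \<psi> \<in> carrier Q \<rightarrow>\<^sub>E C \<and> (\<forall>x\<in>carrier Q. \<forall>y\<in>carrier Q.
        \<psi> (x \<otimes>\<^bsub>Q\<^esub> y) = \<psi> x \<otimes>\<^bsub>G\<^esub> conj_action G p x (\<psi> y))" for \<psi>
    by (simp add: Z1_def)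
  have surjp: "\<exists>x\<in>carrier G. q = p x" if "q \<in> carrier Q" for q using assms(4) that by blast
  have A1: "\<Phi> \<alpha> \<in> ?Z" if a: "\<alpha> \<in> EndN G N" for \<alpha>
  proof -
    have ah: "\<alpha> \<in> hom G G" using a by (auto simp: EndN_def)
    have "\<Phi> \<alpha> \<in> carrier Q \<rightarrow>\<^sub>E C"
    proof
      fix q assume "q \<in> carrier Q"
      then obtain x where x: "x \<in> carrier G" "q = p x" using surjp by blast
      show "\<Phi> \<alpha> q \<in> C" using x Phi_p[OF a x(1)] inC[OF a x(1)] by simp
    next
      fix q assume "q \<notin> carrier Q" then show "\<Phi> \<alpha> q = undefined" by (simp add: \<Phi>_def)
    qed
    moreover have "\<Phi> \<alpha> (q \<otimes>\<^bsub>Q\<^esub> q') = \<Phi> \<alpha> q \<otimes>\<^bsub>G\<^esub> conj_action G p q (\<Phi> \<alpha> q')"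
      if qQ: "q \<in> carrier Q" "q' \<in> carrier Q" for q q'
    proof -
      obtain x where x: "x \<in> carrier G" "q = p x" using surjp[OF qQ(1)] by blast
      obtain y where y: "y \<in> carrier G" "q' = p y" using surjp[OF qQ(2)] by blast
      have aG: "\<alpha> x \<in> carrier G" "\<alpha> y \<in> carrier G" using ah x y by (auto simp: hom_def)
      have xy: "x \<otimes>\<^bsub>G\<^esub> y \<in> carrier G" using x y by simp
      have "\<Phi> \<alpha> (q \<otimes>\<^bsub>Q\<^esub> q') = \<Phi> \<alpha> (p (x \<otimes>\<^bsub>G\<^esub> y))" using x y by (simp only: h.hom_mult)
      also have "\<dots> = \<alpha> (x \<otimes>\<^bsub>G\<^esub> y) \<otimes>\<^bsub>G\<^esub> inv\<^bsub>G\<^esub> (x \<otimes>\<^bsub>G\<^esub> y)"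
        by (rule Phi_p[OF a xy])
      also have "\<dots> = \<alpha> x \<otimes>\<^bsub>G\<^esub> \<alpha> y \<otimes>\<^bsub>G\<^esub> (inv\<^bsub>G\<^esub> y \<otimes>\<^bsub>G\<^esub> inv\<^bsub>G\<^esub> x)"
        using x y ah by (simp add: hom_mult G.inv_mult_group)
      also have "\<dots> = (\<alpha> x \<otimes>\<^bsub>G\<^esub> inv\<^bsub>G\<^esub> x) \<otimes>\<^bsub>G\<^esub> (x \<otimes>\<^bsub>G\<^esub> (\<alpha> y \<otimes>\<^bsub>G\<^esub> inv\<^bsub>G\<^esub> y) \<otimes>\<^bsub>G\<^esub> inv\<^bsub>G\<^esub> x)"
        using x y aG by (simp add: G.m_assoc)
      also have "\<dots> = \<Phi> \<alpha> q \<otimes>\<^bsub>G\<^esub> conj_action G p q (\<Phi> \<alpha> q')"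
      proof -
        show ?thesis unfolding x(2) y(2) Phi_p[OF a x(1)] Phi_p[OF a y(1)] act[OF x(1) inC[OF a y(1)]] ..
      qed
      finally show ?thesis .
    qed
    ultimately show ?thesis by (intro Zd[THEN iffD2] conjI) blast+
  qed
  have A2: "\<Psi> \<psi> \<in> EndN G N" if z: "\<psi> \<in> ?Z" for \<psi>
  proof -
    have pC: "\<psi> q \<in> C" if "q \<in> carrier Q" for q using z that Zd by auto
    have pG: "\<psi> (p x) \<in> carrier G" if "x \<in> carrier G" for x using pC[of "p x"] that CG by auto
    have cr: "\<psi> (q \<otimes>\<^bsub>Q\<^esub> q') = \<psi> q \<otimes>\<^bsub>G\<^esub> conj_action G p q (\<psi> q')"
      if "q \<in> carrier Q" "q' \<in> carrier Q" for q q' using z that Zd by auto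
    have hom: "\<Psi> \<psi> \<in> hom G G"
    proof (rule homI)
      fix x assume "x \<in> carrier G" then show "\<Psi> \<psi> x \<in> carrier G" using pG by (simp add: \<Psi>_def)
    next
      fix x y assume x: "x \<in> carrier G" and y: "y \<in> carrier G"
      have "\<Psi> \<psi> (x \<otimes>\<^bsub>G\<^esub> y) = \<psi> (p x \<otimes>\<^bsub>Q\<^esub> p y) \<otimes>\<^bsub>G\<^esub> (x \<otimes>\<^bsub>G\<^esub> y)"
        using x y by (simp add: \<Psi>_def)
      also have "\<dots> = \<psi> (p x) \<otimes>\<^bsub>G\<^esub> (x \<otimes>\<^bsub>G\<^esub> \<psi> (p y) \<otimes>\<^bsub>G\<^esub> inv\<^bsub>G\<^esub> x) \<otimes>\<^bsub>G\<^esub> (x \<otimes>\<^bsub>G\<^esub> y)"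
        using cr[of "p x" "p y"] act[OF x pC[of "p y"]] x y by simp
      also have "\<dots> = \<Psi> \<psi> x \<otimes>\<^bsub>G\<^esub> \<Psi> \<psi> y"
        using x y pG[OF x] pG[OF y] by (simp add: \<Psi>_def G.m_assoc)
      finally show "\<Psi> \<psi> (x \<otimes>\<^bsub>G\<^esub> y) = \<Psi> \<psi> x \<otimes>\<^bsub>G\<^esub> \<Psi> \<psi> y" .
    qed
    have one: "\<psi> \<one>\<^bsub>Q\<^esub> = \<one>\<^bsub>G\<^esub>"
    proof -
      have c1: "\<psi> \<one>\<^bsub>Q\<^esub> \<in> C" using pC by simp
      have c1G: "\<psi> \<one>\<^bsub>Q\<^esub> \<in> carrier G" using c1 CG by auto
      have "conj_action G p (p \<one>\<^bsub>G\<^esub>) (\<psi> \<one>\<^bsub>Q\<^esub>) = \<psi> \<one>\<^bsub>Q\<^esub>"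
        using act[OF G.one_closed c1] c1G by simp
      then have "\<psi> \<one>\<^bsub>Q\<^esub> = \<psi> \<one>\<^bsub>Q\<^esub> \<otimes>\<^bsub>G\<^esub> \<psi> \<one>\<^bsub>Q\<^esub>"
        using cr[of "\<one>\<^bsub>Q\<^esub>" "\<one>\<^bsub>Q\<^esub>"] by simp
      then show ?thesis using c1G by (metis G.l_cancel_one' G.one_closed)
    qed
    have "\<Psi> \<psi> n = n" if "n \<in> N" for n using that Nd one by (auto simp: \<Psi>_def)
    moreover have "\<Psi> \<psi> \<in> extensional (carrier G)" by (simp add: \<Psi>_def)
    ultimately show ?thesis using hom by (simp add: EndN_def)
  qed
  have B1: "\<Psi> (\<Phi> \<alpha>) = \<alpha>" if a: "\<alpha> \<in> EndN G N" for \<alpha>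
  proof
    fix x show "\<Psi> (\<Phi> \<alpha>) x = \<alpha> x"
    proof (cases "x \<in> carrier G")
      case True
      have "\<alpha> x \<in> carrier G" using a True by (auto simp: EndN_def hom_def)
      then show ?thesis using True Phi_p[OF a True] by (simp add: \<Psi>_def G.m_assoc)
    next
      case False then show ?thesis using a by (auto simp: \<Psi>_def EndN_def extensional_def)
    qed
  qed
  have B2: "\<Phi> (\<Psi> \<psi>) = \<psi>" if z: "\<psi> \<in> ?Z" for \<psi>
  proof
    fix q show "\<Phi> (\<Psi> \<psi>) q = \<psi> q"
    proof (cases "q \<in> carrier Q")
      case True
      then obtain x where x: "x \<in> carrier G" "q = p x" using surjp[OF True] by blast
      have pG: "\<psi> q \<in> carrier G" using z True Zd CG by auto
      have "\<Phi> (\<Psi> \<psi>) q = \<Psi> \<psi> x \<otimes>\<^bsub>G\<^esub> inv\<^bsub>G\<^esub> x" using Phi_p[OF A2[OF z] x(1)] x by simp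
      then show ?thesis using x pG by (simp add: \<Psi>_def G.m_assoc)
    next
      case False then show ?thesis using z Zd by (auto simp: \<Phi>_def)
    qed
  qed
  have "bij_betw \<Phi> (EndN G N) ?Z"
    by (rule bij_betw_byWitness[where f' = \<Psi>]) (use B1 B2 A1 A2 in auto)
  moreover have "\<forall>\<alpha>\<in>EndN G N. \<forall>x\<in>carrier G. \<alpha> x = \<Phi> \<alpha> (p x) \<otimes>\<^bsub>G\<^esub> x"
  proof (intro ballI)
    fix \<alpha> x assume a: "\<alpha> \<in> EndN G N" and x: "x \<in> carrier G"
    have "\<alpha> x \<in> carrier G" using a x by (auto simp: EndN_def hom_def)
    then show "\<alpha> x = \<Phi> \<alpha> (p x) \<otimes>\<^bsub>G\<^esub> x" using Phi_p[OF a x] x by (simp add: G.m_assoc)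
  qed
  ultimately show ?thesis unfolding C_def by blast
qed

end
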